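(* If a finite group $G$ is a $Q\sigma T$-group, then $G/R$ satisfies ${\bf Q}_{\sigma P}$ for every normal subgroup $R$ of $G$.
   Context: $\sigma=\{\sigma_i\mid i\in I\}$ is a partition of the set of all primes. A group is $\sigma$-primary if it is a $\sigma_i$-group for some $i$. $A_G$ is the core of $A$ in $G$. $A$ is $\sigma$-subnormal in $G$ if there is a chain $A=A_0\le\cdots\le A_n=G$ with, for each $i$, $A_{i-1}\trianglelefteq A_i$ or $A_i/(A_{i-1})_{A_i}$ $\sigma$-primary. $A$ is modular in $G$ if (1) $\langle X, A\cap Z\rangle=\langle X,A\rangle\cap Z$ for all $X\le Z\le G$, and (2) $\langle A, Y\cap Z\rangle=\langle A,Y\rangle\cap Z$ for all $Y,Z\le G$ with $A\le Z$. $A$ is $\sigma$-quasinormal if it is $\sigma$-subnormal and modular. $G$ is a $Q\sigma T$-group if whenever $H$ is $\sigma$-quasinormal in $K$ and $K$ is $\sigma$-quasinormal in $G$, $H$ is $\sigma$-quasinormal in $G$. A $P$-group of type $(p,q)$ is a group $A\rtimes\langle t\rangle$ with $A$ an elementary abelian $p$-group and $t$ of prime order $q\neq p$ inducing a non-trivial power automorphism (one fixing every subgroup) on $A$. A group $X$ satisfies ${\bf Q}_{\sigma(p,q)}$ if whenever $N$ is a soluble normal subgroup of $X$ and $P/N$ is a normal subgroup of $X/N$ that is $\sigma$-primary and a $P$-group of type $(p,q)$, every subgroup of $P/N$ is modular in $X/N$. $X$ satisfies ${\bf Q}_{\sigma P}$ if it satisfies ${\bf Q}_{\sigma(p,q)}$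 for every pair of primes $p,q$ for which a $P$-group of type $(p,q)$ exists. *)

theory Defs
  imports "HOL-Algebra.Algebra"
begin

definition prime_partition :: "nat set set \<Rightarrow> bool" where
  "prime_partition \<sigma> \<longleftrightarrow>
     (\<Union>\<sigma>) = {p. Factorial_Ring.prime (p::nat)} \<and> {} \<notin> \<sigma> \<and>
     (\<forall>s\<in>\<sigma>. \<forall>t\<in>\<sigma>. s \<noteq> t \<longrightarrow> s \<inter> t = {})"

definition sigma_primary :: "nat set set \<Rightarrow> ('a, 'b) monoid_scheme \<Rightarrow> bool" where
  "sigma_primary \<sigma> H \<longleftrightarrow>
     (\<exists>s\<in>\<sigma>. \<forall>p. Factorial_Ring.prime (p::nat) \<and> p dvd order H \<longrightarrow> p \<in> s)"

definition core :: "('a, 'b) monoid_scheme \<Rightarrow> 'a set \<Rightarrow> 'a set" where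
  "core G A = (\<Inter>g\<in>carrier G. (\<lambda>x. g \<otimes>\<^bsub>G\<^esub> x \<otimes>\<^bsub>G\<^esub> inv\<^bsub>G\<^esub> g) ` A)"

definition sigma_subnormal :: "nat set set \<Rightarrow> ('a, 'b) monoid_scheme \<Rightarrow> 'a set \<Rightarrow> bool" where
  "sigma_subnormal \<sigma> G A \<longleftrightarrow>
     (\<exists>(C :: nat \<Rightarrow> 'a set) n. C 0 = A \<and> C n = carrier G \<and>
        (\<forall>i\<le>n. subgroup (C i) G) \<and>
        (\<forall>i<n. C i \<subseteq> C (Suc i) \<and>
            (C i \<lhd> G\<lparr>carrier := C (Suc i)\<rparr> \<or>
             sigma_primary \<sigma> (G\<lparr>carrier := C (Suc i)\<rparr> Mod core (G\<lparr>carrier := C (Suc i)\<rparr>) (C i)))))"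

definition modular_subgroup :: "('a, 'b) monoid_scheme \<Rightarrow> 'a set \<Rightarrow> bool" where
  "modular_subgroup G A \<longleftrightarrow> subgroup A G \<and>
     (\<forall>U W. subgroup U G \<and> subgroup W G \<and> U \<subseteq> W \<longrightarrow>
        generate G (U \<union> (A \<inter> W)) = generate G (U \<union> A) \<inter> W) \<and>
     (\<forall>V W. subgroup V G \<and> subgroup W G \<and> A \<subseteq> W \<longrightarrow>
        generate G (A \<union> (V \<inter> W)) = generate G (A \<union> V) \<inter> W)"

definition sigma_quasinormal :: "nat set set \<Rightarrow> ('a, 'b) monoid_scheme \<Rightarrow> 'a set \<Rightarrow> bool" where
  "sigma_quasinormal \<sigma> G A \<longleftrightarrow> sigma_subnormal \<sigma> G A \<and> modular_subgroup G A"

definition QsigmaT_group :: "nat set set \<Rightarrow> ('a, 'b) monoid_scheme \<Rightarrow> bool" where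
  "QsigmaT_group \<sigma> G \<longleftrightarrow>
     (\<forall>H K. subgroup K G \<and> H \<subseteq> K \<and>
        sigma_quasinormal \<sigma> (G\<lparr>carrier := K\<rparr>) H \<and> sigma_quasinormal \<sigma> G K
        \<longrightarrow> sigma_quasinormal \<sigma> G H)"

text \<open>X is a P-group of type (p,q): X = A \<rtimes> <t>, A elementary abelian p-group (normal),
  t of prime order q \<noteq> p inducing a non-trivial power automorphism on A.\<close>
definition P_group_type :: "nat \<Rightarrow> nat \<Rightarrow> ('a, 'b) monoid_scheme \<Rightarrow> bool" where
  "P_group_type p q H \<longleftrightarrow> Factorial_Ring.prime (p::nat) \<and> Factorial_Ring.prime (q::nat) \<and> p \<noteq> q \<and>
     (\<exists>A t. A \<lhd> H \<and> comm_group (H\<lparr>carrier := A\<rparr>) \<and>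
        (\<forall>x\<in>A. x [^]\<^bsub>H\<^esub> p = \<one>\<^bsub>H\<^esub>) \<and>
        t \<in> carrier H \<and> group.ord H t = q \<and>
        A \<inter> generate H {t} = {\<one>\<^bsub>H\<^esub>} \<and>
        set_mult H A (generate H {t}) = carrier H \<and>
        (\<forall>B. subgroup B H \<and> B \<subseteq> A \<longrightarrow>
             (\<lambda>x. t \<otimes>\<^bsub>H\<^esub> x \<otimes>\<^bsub>H\<^esub> inv\<^bsub>H\<^esub> t) ` B = B) \<and>
        (\<exists>x\<in>A. t \<otimes>\<^bsub>H\<^esub> x \<otimes>\<^bsub>H\<^esub> inv\<^bsub>H\<^esub> t \<noteq> x))"

definition Q_sigma_pq :: "nat set set \<Rightarrow> nat \<Rightarrow> nat \<Rightarrow> ('a, 'b) monoid_scheme \<Rightarrow> bool" where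
  "Q_sigma_pq \<sigma> p q H \<longleftrightarrow>
     (\<forall>N Q. N \<lhd> H \<and> solvable (H\<lparr>carrier := N\<rparr>) \<and>
        Q \<lhd> (H Mod N) \<and>
        sigma_primary \<sigma> ((H Mod N)\<lparr>carrier := Q\<rparr>) \<and>
        P_group_type p q ((H Mod N)\<lparr>carrier := Q\<rparr>)
        \<longrightarrow> (\<forall>B. subgroup B (H Mod N) \<and> B \<subseteq> Q \<longrightarrow> modular_subgroup (H Mod N) B))"

text \<open>Property Q_{sigma P}: Q_{sigma(p,q)} for every pair of primes for which a P-group of
  type (p,q) exists (existence witnessed on a countable carrier type).\<close>
definition Q_sigma_P :: "nat set set \<Rightarrow> ('a, 'b) monoid_scheme \<Rightarrow> bool" where
  "Q_sigma_P \<sigma> H \<longleftrightarrow>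
     (\<forall>p q. (\<exists>Y :: nat monoid. group Y \<and> P_group_type p q Y) \<longrightarrow> Q_sigma_pq \<sigma> p q H)"

end

theory Submission
  imports Defs
begin

lemma (in group) set_multE:
  assumes "x \<in> N <#> H" obtains n h where "n \<in> N" "h \<in> H" "x = n \<otimes> h"
  using assms unfolding set_mult_def by blast

lemma (in group) set_multI:
  assumes "n \<in> N" "h \<in> H" shows "n \<otimes> h \<in> N <#> H"
  using assms unfolding set_mult_def by blast

lemma (in group) normal_mult_sub:
  assumes "N \<lhd> G" "subgroup H G" shows "subgroup (N <#> H) G"
  using second_isomorphism_grp.normal_set_mult_subgroup[of N G H] assms
  unfolding second_isomorphism_grp_def second_isomorphism_grp_axioms_def by blast

lemma (in group) gen_normal_prod:
  assumes N: "N \<lhd> G" and H: "subgroup H G"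
  shows "generate G (N \<union> H) \<subseteq> N <#> H" "generate G (H \<union> N) \<subseteq> N <#> H"
proof -
  have s: "subgroup (N <#> H) G" by (rule normal_mult_sub[OF N H])
  have "N \<subseteq> N <#> H"
  proof
    fix n assume "n \<in> N"
    then have "n \<otimes> \<one> \<in> N <#> H" using set_multI subgroup.one_closed[OF H] by blast
    then show "n \<in> N <#> H" using \<open>n \<in> N\<close> N normal_imp_subgroup subgroup.mem_carrier by fastforce
  qed
  moreover have "H \<subseteq> N <#> H"
  proof
    fix h assume "h \<in> H"
    then have "\<one> \<otimes> h \<in> N <#> H" using set_multI subgroup.one_closed[OF normal_imp_subgroup[OF N]] by blast
    then show "h \<in> N <#> H" using \<open>h \<in> H\<close> H subgroup.mem_carrier by fastforce
  qed
  ultimately show "generate G (N \<union> H) \<subseteq> N <#> H" "generate G (H \<union> N) \<subseteq> N <#> H"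
    using generate_subgroup_incl[OF _ s] by (auto simp: Un_commute)
qed


lemma (in group) expo_mod_nat:
  assumes "x \<in> carrier G" "x [^] p = \<one>"
  shows "x [^] (n::nat) = x [^] (n mod p)"
proof -
  have "x [^] n = x [^] (p * (n div p) + n mod p)" by simp
  also have "\<dots> = (x [^] p) [^] (n div p) \<otimes> x [^] (n mod p)"
    using assms(1) by (simp add: nat_pow_mult nat_pow_pow)
  also have "\<dots> = x [^] (n mod p)" using assms by simp
  finally show ?thesis .
qed

lemma (in group) expo_mod_int:
  assumes "x \<in> carrier G" "x [^] p = \<one>" "p > 0"
  shows "x [^] (k::int) = x [^] (nat (k mod int p))"
proof -
  have e: "k = int p * (k div int p) + k mod int p" by simp
  have "x [^] (int p * (k div int p) + k mod int p) = x [^] (int p * (k div int p)) \<otimes> x [^] (k mod int p)"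
    by (rule int_pow_mult[OF assms(1)])
  also have "x [^] (int p * (k div int p)) = (x [^] int p) [^] (k div int p)"
    by (rule int_pow_pow[OF assms(1), symmetric])
  also have "\<dots> = \<one>" using assms by (simp add: int_pow_int)
  finally have 1: "x [^] k = x [^] (k mod int p)" using e assms(1) by simp
  have 2: "k mod int p = int (nat (k mod int p))" using assms(3) by simp
  have 3: "x [^] (k mod int p) = x [^] (int (nat (k mod int p)))" using 2 by (rule arg_cong)
  show ?thesis unfolding 1 3 by (rule int_pow_int)
qed

lemma (in group) cancel_l [simp]: "a \<in> carrier G \<Longrightarrow> x \<in> carrier G \<Longrightarrow> a \<otimes> (inv a \<otimes> x) = x"
  by (simp add: m_assoc[symmetric])

lemma (in group) cancel_l2 [simp]: "a \<in> carrier G \<Longrightarrow> x \<in> carrier G \<Longrightarrow> inv a \<otimes> (a \<otimes> x) = x"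
  by (simp add: m_assoc[symmetric])

locale pgrp = group +
  fixes A :: "'a set" and t :: 'a and p :: nat
  assumes nA: "A \<lhd> G"
    and comm: "\<And>x y. x \<in> A \<Longrightarrow> y \<in> A \<Longrightarrow> x \<otimes> y = y \<otimes> x"
    and expo: "\<And>x. x \<in> A \<Longrightarrow> x [^] p = \<one>" and pp: "Factorial_Ring.prime p"
    and nsub: "\<And>C. subgroup C G \<Longrightarrow> C \<subseteq> A \<Longrightarrow> C \<lhd> G"
    and tc: "t \<in> carrier G"
    and iii: "\<And>H. subgroup H G \<Longrightarrow> \<not> H \<subseteq> A \<Longrightarrow> \<exists>a\<in>A. t \<otimes> a \<in> H"
    and gen: "carrier G \<subseteq> A <#> generate G {t}"
begin

lemma sA: "subgroup A G" by (rule normal_imp_subgroup[OF nA])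

lemma Acar: "x \<in> A \<Longrightarrow> x \<in> carrier G" by (rule subgroup.mem_carrier[OF sA])

lemma HA:
  assumes H: "subgroup H G" and nH: "\<not> H \<subseteq> A"
  shows "carrier G \<subseteq> A <#> H"
proof -
  have s: "subgroup (A <#> H) G" by (rule normal_mult_sub[OF nA H])
  obtain a where a: "a \<in> A" "t \<otimes> a \<in> H" using iii[OF H nH] by blast
  have ac: "a \<in> carrier G" using a Acar by blast
  have "t \<otimes> inv a \<otimes> inv t \<in> A"
    using normal.inv_op_closed2[OF nA tc subgroup.m_inv_closed[OF sA a(1)]] .
  then have "(t \<otimes> inv a \<otimes> inv t) \<otimes> (t \<otimes> a) \<in> A <#> H" using a set_multI by blast
  moreover have "(t \<otimes> inv a \<otimes> inv t) \<otimes> (t \<otimes> a) = t"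
  proof -
    have "inv t \<otimes> (t \<otimes> a) = a" using tc ac by (simp add: m_assoc[symmetric])
    then show ?thesis using tc ac by (simp add: m_assoc)
  qed
  ultimately have "t \<in> A <#> H" by simp
  then have g: "generate G {t} \<subseteq> A <#> H" using generate_subgroup_incl[OF _ s, of "{t}"] by simp
  have "A \<subseteq> generate G (A \<union> H)" using generate.incl[of _ "A \<union> H" G] by blast
  then have AH: "A \<subseteq> A <#> H" using gen_normal_prod(1)[OF nA H] by blast
  show ?thesis
  proof
    fix x assume "x \<in> carrier G"
    then have "x \<in> A <#> generate G {t}" using gen by blast
    then obtain a y where ay: "a \<in> A" "y \<in> generate G {t}" "x = a \<otimes> y" by (rule set_multE)
    have "a \<in> A <#> H" "y \<in> A <#> H" using ay g AH by blast+
    then have "a \<otimes> y \<in> A <#> H" by (rule subgroup.m_closed[OF s])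
    then show "x \<in> A <#> H" using ay by simp
  qed
qed

lemma Elem:
  assumes H: "subgroup H G" and H': "subgroup H' G" and sub: "H' \<subseteq> H"
    and nH': "\<not> H' \<subseteq> A" and int: "H \<inter> A \<subseteq> H'"
  shows "H \<subseteq> H'"
proof
  fix g assume g: "g \<in> H"
  have "g \<in> carrier G" using subgroup.mem_carrier[OF H g] .
  then have "g \<in> A <#> H'" using HA[OF H' nH'] by blast
  then obtain a h where ah: "a \<in> A" "h \<in> H'" "g = a \<otimes> h" by (rule set_multE)
  have hc: "h \<in> carrier G" "a \<in> carrier G" using subgroup.mem_carrier[OF H' ah(2)] Acar[OF ah(1)] by auto
  have "a = g \<otimes> inv h" using ah hc by (simp add: m_assoc)
  also have "\<dots> \<in> H"
  proof -
    have "h \<in> H" using ah sub by blast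
    then have "inv h \<in> H" by (rule subgroup.m_inv_closed[OF H])
    then show ?thesis by (rule subgroup.m_closed[OF H g])
  qed
  finally have "a \<in> H \<inter> A" using ah(1) by blast
  then have "a \<in> H'" using int by blast
  then have "a \<otimes> h \<in> H'" using ah(2) by (rule subgroup.m_closed[OF H'])
  then show "g \<in> H'" using ah by simp
qed


lemma p0: "p > 0" using pp prime_gt_0_nat by simp

lemma notA:
  assumes H: "subgroup H G" and nH: "\<not> H \<subseteq> A" shows "t \<notin> A"
proof
  assume tA: "t \<in> A"
  have g: "generate G {t} \<subseteq> A" using generate_subgroup_incl[OF _ sA, of "{t}"] tA by simp
  have "carrier G \<subseteq> A"
  proof
    fix x assume "x \<in> carrier G"
    then have "x \<in> A <#> generate G {t}" using gen by auto
    then obtain a y where ay: "a \<in> A" "y \<in> generate G {t}" "x = a \<otimes> y" by (rule set_multE)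
    have "y \<in> A" using ay(2) g by auto
    then have "a \<otimes> y \<in> A" using ay(1) subgroup.m_closed[OF sA] by simp
    then show "x \<in> A" using ay by simp
  qed
  then show False using nH subgroup.subset[OF H] by auto
qed

end

lemma (in group) sub_pow:
  assumes "subgroup H G" "h \<in> H" shows "h [^] (n::nat) \<in> H"
  using subgroup_int_pow_closed[OF assms, of "int n"] by (simp add: int_pow_int)

lemma (in group) set_mult_sup1:
  assumes "subgroup H G" "N \<subseteq> carrier G" shows "N \<subseteq> N <#> H"
proof
  fix n assume n: "n \<in> N"
  then have "n \<otimes> \<one> \<in> N <#> H" using set_multI subgroup.one_closed[OF assms(1)] by metis
  then show "n \<in> N <#> H" using n assms(2) by auto
qed

lemma (in group) set_mult_sup2:
  assumes "subgroup N G" "H \<subseteq> carrier G" shows "H \<subseteq> N <#> H"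
proof
  fix h assume h: "h \<in> H"
  then have "\<one> \<otimes> h \<in> N <#> H" using set_multI subgroup.one_closed[OF assms(1)] by metis
  then show "h \<in> N <#> H" using h assms(2) by auto
qed

context pgrp begin

lemma modlaw:
  assumes U: "subgroup U G" and V: "subgroup V G" and Z: "subgroup Z G" and UZ: "U \<subseteq> Z"
  shows "generate G (U \<union> V) \<inter> Z \<subseteq> generate G (U \<union> (V \<inter> Z))"
proof -
  let ?D = "generate G (U \<union> (V \<inter> Z))"
  have Uc: "U \<subseteq> carrier G" using subgroup.subset[OF U] .
  have Vc: "V \<subseteq> carrier G" using subgroup.subset[OF V] .
  have Zc: "Z \<subseteq> carrier G" using subgroup.subset[OF Z] .
  have sD: "subgroup ?D G" by (rule generate_is_subgroup) (use Uc Vc in auto)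
  have UD: "U \<subseteq> ?D" using generate.incl[of _ "U \<union> (V \<inter> Z)" G] by auto
  have VZD: "V \<inter> Z \<subseteq> ?D" using generate.incl[of _ "U \<union> (V \<inter> Z)" G] by auto
  show ?thesis
  proof (cases "V \<subseteq> A")
    case True
    have Vn: "V \<lhd> G" using nsub[OF V True] .
    have W: "generate G (U \<union> V) \<subseteq> V <#> U" by (rule gen_normal_prod(2)[OF Vn U])
    show ?thesis
    proof
      fix g assume g: "g \<in> generate G (U \<union> V) \<inter> Z"
      then have "g \<in> V <#> U" using W by auto
      then obtain y x where yx: "y \<in> V" "x \<in> U" "g = y \<otimes> x" by (rule set_multE)
      have c: "y \<in> carrier G" "x \<in> carrier G" using yx Uc Vc by auto
      have "y = g \<otimes> inv x" using yx c by (simp add: m_assoc)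
      also have "\<dots> \<in> Z" using g yx UZ Z by (auto intro!: subgroup.m_closed[OF Z] subgroup.m_inv_closed[OF Z])
      finally have "y \<in> ?D" using yx VZD by auto
      moreover have "x \<in> ?D" using yx UD by auto
      ultimately have "y \<otimes> x \<in> ?D" by (rule subgroup.m_closed[OF sD])
      then show "g \<in> ?D" using yx by simp
    qed
  next
    case nV: False
    show ?thesis
    proof (cases "U \<subseteq> A")
      case True
      have Un: "U \<lhd> G" using nsub[OF U True] .
      have W: "generate G (U \<union> V) \<subseteq> U <#> V" by (rule gen_normal_prod(1)[OF Un V])
      show ?thesis
      proof
        fix g assume g: "g \<in> generate G (U \<union> V) \<inter> Z"
        then have "g \<in> U <#> V" using W by auto
        then obtain x y where yx: "x \<in> U" "y \<in> V" "g = x \<otimes> y" by (rule set_multE)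
        have c: "y \<in> carrier G" "x \<in> carrier G" using yx Uc Vc by auto
        have "y = inv x \<otimes> g" using yx c by (simp add: m_assoc[symmetric])
        also have "\<dots> \<in> Z" using g yx UZ Z by (auto intro!: subgroup.m_closed[OF Z] subgroup.m_inv_closed[OF Z])
        finally have "y \<in> ?D" using yx VZD by auto
        moreover have "x \<in> ?D" using yx UD by auto
        ultimately have "x \<otimes> y \<in> ?D" using subgroup.m_closed[OF sD] by simp
        then show "g \<in> ?D" using yx by simp
      qed
    next
      case nU: False
      obtain aU where aU: "aU \<in> A" "t \<otimes> aU \<in> U" using iii[OF U nU] by auto
      obtain aV where aV: "aV \<in> A" "t \<otimes> aV \<in> V" using iii[OF V nV] by auto
      have aUc: "aU \<in> carrier G" and aVc: "aV \<in> carrier G" using Acar aU aV by auto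
      define d where "d = inv aU \<otimes> aV"
      have dA: "d \<in> A" unfolding d_def using aU aV subgroup.m_closed[OF sA] subgroup.m_inv_closed[OF sA] by auto
      have dc: "d \<in> carrier G" using Acar dA by auto
      have sU0: "subgroup (U \<inter> A) G" by (rule subgroups_Inter_pair[OF U sA])
      have sV0: "subgroup (V \<inter> A) G" by (rule subgroups_Inter_pair[OF V sA])
      have nU0: "U \<inter> A \<lhd> G" using nsub[OF sU0] by auto
      have nV0: "V \<inter> A \<lhd> G" using nsub[OF sV0] by auto
      have sgd: "subgroup (generate G {d}) G" using generate_is_subgroup dc by auto
      have gdA: "generate G {d} \<subseteq> A" using generate_subgroup_incl[OF _ sA, of "{d}"] dA by auto
      have ngd: "generate G {d} \<lhd> G" using nsub[OF sgd gdA] .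
      define C where "C = ((U \<inter> A) <#> (V \<inter> A)) <#> generate G {d}"
      have nUV0: "(U \<inter> A) <#> (V \<inter> A) \<lhd> G" by (rule normal_subgroup_set_mult_closed[OF nU0 nV0])
      have nC: "C \<lhd> G" unfolding C_def by (rule normal_subgroup_set_mult_closed[OF nUV0 ngd])
      have sC: "subgroup C G" using normal_imp_subgroup[OF nC] .
      have sUV0: "subgroup ((U \<inter> A) <#> (V \<inter> A)) G" using normal_imp_subgroup[OF nUV0] .
      have UV0C: "(U \<inter> A) <#> (V \<inter> A) \<subseteq> C" unfolding C_def
        by (rule set_mult_sup1[OF sgd subgroup.subset[OF sUV0]])
      have U0C: "U \<inter> A \<subseteq> C"
        using set_mult_sup1[OF sV0 subgroup.subset[OF sU0]] UV0C by auto
      have V0C: "V \<inter> A \<subseteq> C"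
        using set_mult_sup2[OF sU0 subgroup.subset[OF sV0]] UV0C by auto
      have dC: "d \<in> C"
        using set_mult_sup2[OF sUV0, of "generate G {d}"] gdA Acar generate.incl[of d "{d}" G] unfolding C_def by auto
      have CA: "C \<subseteq> A"
      proof
        fix c assume "c \<in> C"
        then obtain s1 s2 where s: "s1 \<in> (U \<inter> A) <#> (V \<inter> A)" "s2 \<in> generate G {d}" "c = s1 \<otimes> s2"
          unfolding C_def by (rule set_multE)
        obtain u w where uw: "u \<in> U \<inter> A" "w \<in> V \<inter> A" "s1 = u \<otimes> w" using s(1) by (rule set_multE)
        have "s1 \<in> A" using uw subgroup.m_closed[OF sA] by auto
        moreover have "s2 \<in> A" using s gdA by auto
        ultimately show "c \<in> A" using s subgroup.m_closed[OF sA] by auto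
      qed
      have sCU: "subgroup (C <#> U) G" by (rule normal_mult_sub[OF nC U])
      have UCU: "U \<subseteq> C <#> U" by (rule set_mult_sup2[OF sC Uc])
      have VCU: "V \<subseteq> C <#> U"
      proof -
        let ?H = "V \<inter> (C <#> U)"
        have sH: "subgroup ?H G" by (rule subgroups_Inter_pair[OF V sCU])
        have tU: "t \<otimes> aU \<in> carrier G" using aU Uc by auto
        define c where "c = (t \<otimes> aU) \<otimes> d \<otimes> inv (t \<otimes> aU)"
        have cC: "c \<in> C" unfolding c_def by (rule normal.inv_op_closed2[OF nC tU dC])
        have "c \<otimes> (t \<otimes> aU) = t \<otimes> aU \<otimes> d" unfolding c_def using tU dc by (simp add: m_assoc)
        also have "\<dots> = t \<otimes> aV"
        proof -
          have "aU \<otimes> (inv aU \<otimes> aV) = aV" using aUc aVc by (simp add: m_assoc[symmetric])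
          then show ?thesis unfolding d_def using tc aUc aVc by (simp add: m_assoc)
        qed
        finally have "t \<otimes> aV \<in> C <#> U" using set_multI[OF cC aU(2)] by simp
        then have tVH: "t \<otimes> aV \<in> ?H" using aV by auto
        have "t \<otimes> aV \<notin> A"
        proof
          assume "t \<otimes> aV \<in> A"
          then have "(t \<otimes> aV) \<otimes> inv aV \<in> A" using aV subgroup.m_closed[OF sA] subgroup.m_inv_closed[OF sA] by auto
          then have "t \<in> A" using tc aVc by (simp add: m_assoc)
          then show False using notA[OF U nU] by simp
        qed
        then have nH: "\<not> ?H \<subseteq> A" using tVH by auto
        have "V \<inter> A \<subseteq> ?H" using V0C set_mult_sup1[OF U, of C] subgroup.subset[OF sC] by auto
        then have "V \<subseteq> ?H" using Elem[OF V sH _ nH] by auto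
        then show ?thesis by auto
      qed
      have WCU: "generate G (U \<union> V) \<subseteq> C <#> U"
        using generate_subgroup_incl[OF _ sCU, of "U \<union> V"] UCU VCU by auto
      have WA: "generate G (U \<union> V) \<inter> A \<subseteq> C"
      proof
        fix g assume g: "g \<in> generate G (U \<union> V) \<inter> A"
        then have "g \<in> C <#> U" using WCU by auto
        then obtain c x where cx: "c \<in> C" "x \<in> U" "g = c \<otimes> x" by (rule set_multE)
        have cc: "c \<in> carrier G" "x \<in> carrier G" using cx Uc subgroup.subset[OF sC] by auto
        have "x = inv c \<otimes> g" using cx cc by (simp add: m_assoc[symmetric])
        also have "\<dots> \<in> A" using g cx CA subgroup.m_closed[OF sA] subgroup.m_inv_closed[OF sA] by auto
        finally have "x \<in> C" using cx U0C by auto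
        then show "g \<in> C" using cx subgroup.m_closed[OF sC] by auto
      qed
      let ?L = "generate G (U \<union> V) \<inter> Z"
      have sW: "subgroup (generate G (U \<union> V)) G" by (rule generate_is_subgroup) (use Uc Vc in auto)
      have sL: "subgroup ?L G" by (rule subgroups_Inter_pair[OF sW Z])
      have DL: "?D \<subseteq> ?L"
      proof -
        have "?D \<subseteq> generate G (U \<union> V)" by (rule mono_generate) auto
        moreover have "?D \<subseteq> Z" using generate_subgroup_incl[OF _ Z, of "U \<union> (V \<inter> Z)"] UZ by auto
        ultimately show ?thesis by auto
      qed
      have nD: "\<not> ?D \<subseteq> A" using nU UD by auto
      have LA: "?L \<inter> A \<subseteq> ?D"
      proof
        fix e assume e: "e \<in> ?L \<inter> A"
        then have eC: "e \<in> C" using WA by auto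
        have eZ: "e \<in> Z" using e by auto
        obtain s1 s2 where s: "s1 \<in> (U \<inter> A) <#> (V \<inter> A)" "s2 \<in> generate G {d}" "e = s1 \<otimes> s2"
          using eC unfolding C_def by (rule set_multE)
        obtain u w where uw: "u \<in> U \<inter> A" "w \<in> V \<inter> A" "s1 = u \<otimes> w" using s(1) by (rule set_multE)
        have uc: "u \<in> carrier G" and wc: "w \<in> carrier G" using uw Acar by auto
        obtain k :: int where k: "s2 = d [^] k" using s(2) generate_pow[OF dc] by auto
        define k0 where "k0 = nat (k mod int p)"
        have k0: "s2 = d [^] k0" unfolding k k0_def by (rule expo_mod_int[OF dc expo[OF dA] p0])
        have k0p: "k0 < p"
        proof -
          have "0 \<le> k mod int p" "k mod int p < int p" using p0 by simp_all
          then show ?thesis unfolding k0_def by (simp add: nat_less_iff)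
        qed
        have e2: "e = u \<otimes> (w \<otimes> d [^] k0)" using s uw k0 uc wc dc by (simp add: m_assoc)
        have ueZ: "u \<in> Z" "u \<in> ?D" using uw UZ UD by auto
        have vZ: "w \<otimes> d [^] k0 \<in> Z"
        proof -
          have "w \<otimes> d [^] k0 = inv u \<otimes> e" using e2 uc wc dc by (simp add: m_assoc[symmetric])
          also have "\<dots> \<in> Z" using ueZ eZ subgroup.m_closed[OF Z] subgroup.m_inv_closed[OF Z] by auto
          finally show ?thesis .
        qed
        have "w \<otimes> d [^] k0 \<in> ?D"
        proof (cases "k0 = 0")
          case True
          then have "w \<otimes> d [^] k0 = w" using wc by simp
          then show ?thesis using vZ uw VZD by auto
        next
          case False
          have "coprime k0 p"
          proof -
            have "\<not> p dvd k0" using False k0p by (auto dest: dvd_imp_le)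
            then show ?thesis using prime_imp_coprime[OF pp, of k0] by (simp add: coprime_commute)
          qed
          then obtain k1 y1 where b: "k0 * k1 = p * y1 + 1" using bezout_nat[OF False, of p] by auto
          have m1: "(k0 * k1) mod p = 1 mod p" unfolding b by (rule mod_mult_self4)
          have dk: "d [^] (k0 * k1) = d" 
            using expo_mod_nat[OF dc expo[OF dA], of "k0 * k1"] expo_mod_nat[OF dc expo[OF dA], of 1] m1 dc by simp
          have wk: "w [^] (k1 * k0) = w"
            using expo_mod_nat[OF wc expo, of "k1 * k0"] expo_mod_nat[OF wc expo, of 1] m1 wc uw
            by (simp add: mult.commute)
          define z where "z = (w \<otimes> d [^] k0) [^] k1"
          have zZ: "z \<in> Z" unfolding z_def using sub_pow[OF Z vZ] .
          have dkA: "d [^] k0 \<in> A" using sub_pow[OF sA dA] .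
          have wkA: "w [^] k1 \<in> A" using sub_pow[OF sA] uw by auto
          have z2: "z = w [^] k1 \<otimes> d" unfolding z_def
            using pow_mult_distrib[OF comm[OF _ dkA] wc nat_pow_closed[OF dc]] uw dk dc
            by (simp add: nat_pow_pow)
          have y1V: "t \<otimes> aV \<otimes> w [^] k1 \<in> V" using aV wkA uw sub_pow[OF V] subgroup.m_closed[OF V] by auto
          have y1eq: "t \<otimes> aV \<otimes> w [^] k1 = (t \<otimes> aU) \<otimes> z"
          proof -
            have "(t \<otimes> aU) \<otimes> z = t \<otimes> aU \<otimes> (d \<otimes> w [^] k1)" 
              unfolding z2 using comm[OF wkA dA] by simp
            also have "\<dots> = t \<otimes> (aU \<otimes> inv aU) \<otimes> aV \<otimes> w [^] k1"
              unfolding d_def using tc aUc aVc wc by (simp add: m_assoc)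
            also have "\<dots> = t \<otimes> aV \<otimes> w [^] k1"
            proof -
              have "aU \<otimes> inv aU = \<one>" using aUc by simp
              then show ?thesis using tc by simp
            qed
            finally show ?thesis by simp
          qed
          have tUZ: "t \<otimes> aU \<in> Z" using aU UZ by auto
          have "t \<otimes> aV \<otimes> w [^] k1 \<in> Z" unfolding y1eq using tUZ zZ subgroup.m_closed[OF Z] by auto
          then have y1D: "t \<otimes> aV \<otimes> w [^] k1 \<in> ?D" using y1V VZD by auto
          have tUc: "t \<otimes> aU \<in> carrier G" using tc aUc by auto
          have "z = inv (t \<otimes> aU) \<otimes> (t \<otimes> aV \<otimes> w [^] k1)" unfolding y1eq
          proof -
            have "z \<in> carrier G" using zZ Zc by auto
            then show "z = inv (t \<otimes> aU) \<otimes> (t \<otimes> aU \<otimes> z)" using tUc cancel_l2 by simp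
          qed
          also have "\<dots> \<in> ?D" using y1D aU UD subgroup.m_closed[OF sD] subgroup.m_inv_closed[OF sD] by auto
          finally have zD: "z \<in> ?D" .
          have "z [^] k0 = w [^] (k1 * k0) \<otimes> d [^] k0"
            unfolding z2 using pow_mult_distrib[OF comm[OF wkA dA] nat_pow_closed[OF wc] dc] wc
            by (simp add: nat_pow_pow)
          also have "\<dots> = w \<otimes> d [^] k0" using wk by simp
          finally show ?thesis using sub_pow[OF sD zD, of k0] by simp
        qed
        then show "e \<in> ?D" unfolding e2 using ueZ subgroup.m_closed[OF sD] by auto
      qed
      show ?thesis using Elem[OF sL sD DL nD LA] .
    qed
  qed
qed

end

lemma (in group) gen_sub_easy:
  assumes "U \<subseteq> carrier G" "V \<subseteq> carrier G" "subgroup Z G" "U \<subseteq> Z"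
  shows "generate G (U \<union> (V \<inter> Z)) \<subseteq> generate G (U \<union> V) \<inter> Z"
proof -
  have "generate G (U \<union> (V \<inter> Z)) \<subseteq> generate G (U \<union> V)" by (rule mono_generate) auto
  moreover have "generate G (U \<union> (V \<inter> Z)) \<subseteq> Z" by (rule generate_subgroup_incl) (use assms in auto)
  ultimately show ?thesis by auto
qed

lemma (in group) modular_from_law:
  assumes B: "subgroup B G"
    and law: "\<And>U V Z. subgroup U G \<Longrightarrow> subgroup V G \<Longrightarrow> subgroup Z G \<Longrightarrow> U \<subseteq> Z \<Longrightarrow>
       generate G (U \<union> V) \<inter> Z \<subseteq> generate G (U \<union> (V \<inter> Z))"
  shows "modular_subgroup G B"
  unfolding modular_subgroup_def
proof (intro conjI allI impI)
  show "subgroup B G" by (rule B)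
  fix U W assume a: "subgroup U G \<and> subgroup W G \<and> U \<subseteq> W"
  show "generate G (U \<union> (B \<inter> W)) = generate G (U \<union> B) \<inter> W"
    using gen_sub_easy[of U B W] law[of U B W] a B subgroup.subset by (metis subset_antisym)
next
  fix V W assume a: "subgroup V G \<and> subgroup W G \<and> B \<subseteq> W"
  show "generate G (B \<union> (V \<inter> W)) = generate G (B \<union> V) \<inter> W"
    using gen_sub_easy[of B V W] law[of B V W] a B subgroup.subset by (metis subset_antisym)
qed

lemma (in group) normal_pow_prod:
  assumes N: "N \<lhd> G" and a: "a \<in> N" and s: "s \<in> carrier G"
  shows "\<exists>b\<in>N. (a \<otimes> s) [^] (j::nat) = b \<otimes> s [^] j"
proof (induction j)
  case 0
  have "\<one> \<in> N" using subgroup.one_closed[OF normal_imp_subgroup[OF N]] .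
  moreover have "(a \<otimes> s) [^] (0::nat) = \<one> \<otimes> s [^] (0::nat)" by simp
  ultimately show ?case by blast
next
  case (Suc j)
  then obtain b where b: "b \<in> N" "(a \<otimes> s) [^] j = b \<otimes> s [^] j" by auto
  have Nc: "\<And>x. x \<in> N \<Longrightarrow> x \<in> carrier G" using subgroup.mem_carrier[OF normal_imp_subgroup[OF N]] .
  have ac: "a \<in> carrier G" using Nc a .
  have bc: "b \<in> carrier G" using Nc b(1) .
  have sj: "s [^] j \<in> carrier G" using s by simp
  have c1: "s [^] j \<otimes> a \<otimes> inv (s [^] j) \<in> N" by (rule normal.inv_op_closed2[OF N sj a])
  have c2: "b \<otimes> (s [^] j \<otimes> a \<otimes> inv (s [^] j)) \<in> N"
    using c1 b(1) subgroup.m_closed[OF normal_imp_subgroup[OF N]] by auto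
  have "(a \<otimes> s) [^] Suc j = b \<otimes> (s [^] j \<otimes> a \<otimes> inv (s [^] j)) \<otimes> s [^] Suc j"
    using b(2) ac bc s sj by (simp add: m_assoc)
  then show ?case using c2 by blast
qed

lemma (in group) Pgroup_pgrp:
  assumes pt: "P_group_type p q G"
  shows "\<exists>A t. pgrp G A t p"
proof -
  from pt obtain A t where pp: "Factorial_Ring.prime p" and qp: "Factorial_Ring.prime q"
    and nA: "A \<lhd> G" and cg: "comm_group (G\<lparr>carrier := A\<rparr>)"
    and ex: "\<forall>x\<in>A. x [^] p = \<one>" and tc: "t \<in> carrier G" and ot: "ord t = q"
    and gen: "A <#> generate G {t} = carrier G"
    and pw: "\<forall>B. subgroup B G \<and> B \<subseteq> A \<longrightarrow> (\<lambda>x. t \<otimes> x \<otimes> inv t) ` B = B"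
    unfolding P_group_type_def by blast
  have sA: "subgroup A G" using normal_imp_subgroup[OF nA] .
  have Ac: "\<And>x. x \<in> A \<Longrightarrow> x \<in> carrier G" using subgroup.mem_carrier[OF sA] .
  have comm: "\<And>x y. x \<in> A \<Longrightarrow> y \<in> A \<Longrightarrow> x \<otimes> y = y \<otimes> x"
    using comm_monoid.m_comm[OF comm_group.axioms(1)[OF cg]] by simp
  have nsub: "C \<lhd> G" if C: "subgroup C G" "C \<subseteq> A" for C
  proof -
    define S where "S = {g \<in> carrier G. \<forall>x\<in>C. g \<otimes> x \<otimes> inv g \<in> C \<and> inv g \<otimes> x \<otimes> g \<in> C}"
    have Cc: "\<And>x. x \<in> C \<Longrightarrow> x \<in> carrier G" using C Ac by auto
    have sS: "subgroup S G"
    proof (rule subgroupI)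
      show "S \<subseteq> carrier G" unfolding S_def by auto
      show "S \<noteq> {}"
      proof -
        have "\<one> \<in> S" unfolding S_def using Cc by auto
        then show ?thesis by auto
      qed
    next
      fix g assume "g \<in> S"
      then show "inv g \<in> S" unfolding S_def by auto
    next
      fix g h assume g: "g \<in> S" and h: "h \<in> S"
      have gc: "g \<in> carrier G" and hc: "h \<in> carrier G" using g h unfolding S_def by auto
      show "g \<otimes> h \<in> S" unfolding S_def
      proof (intro CollectI conjI ballI)
        show "g \<otimes> h \<in> carrier G" using gc hc by simp
        fix x assume x: "x \<in> C"
        have xc: "x \<in> carrier G" using Cc x .
        have 1: "h \<otimes> x \<otimes> inv h \<in> C" "inv g \<otimes> x \<otimes> g \<in> C" using g h x unfolding S_def by auto
        have "g \<otimes> (h \<otimes> x \<otimes> inv h) \<otimes> inv g \<in> C" using g 1 unfolding S_def by auto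
        moreover have "g \<otimes> (h \<otimes> x \<otimes> inv h) \<otimes> inv g = g \<otimes> h \<otimes> x \<otimes> inv (g \<otimes> h)"
          using gc hc xc by (simp add: m_assoc inv_mult_group)
        ultimately show "g \<otimes> h \<otimes> x \<otimes> inv (g \<otimes> h) \<in> C" by simp
        have "inv h \<otimes> (inv g \<otimes> x \<otimes> g) \<otimes> h \<in> C" using h 1 unfolding S_def by auto
        moreover have "inv h \<otimes> (inv g \<otimes> x \<otimes> g) \<otimes> h = inv (g \<otimes> h) \<otimes> x \<otimes> (g \<otimes> h)"
          using gc hc xc by (simp add: m_assoc inv_mult_group)
        ultimately show "inv (g \<otimes> h) \<otimes> x \<otimes> (g \<otimes> h) \<in> C" by simp
      qed
    qed
    have tS: "t \<in> S" unfolding S_def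
    proof (intro CollectI conjI ballI tc)
      fix x assume x: "x \<in> C"
      have im: "(\<lambda>x. t \<otimes> x \<otimes> inv t) ` C = C" using pw C by auto
      show "t \<otimes> x \<otimes> inv t \<in> C" using im x by auto
      from x im obtain y where y: "y \<in> C" "x = t \<otimes> y \<otimes> inv t" by auto
      have "inv t \<otimes> x \<otimes> t = y" using y Cc tc by (simp add: m_assoc)
      then show "inv t \<otimes> x \<otimes> t \<in> C" using y by simp
    qed
    have AS: "A \<subseteq> S"
    proof
      fix a assume a: "a \<in> A"
      have ac: "a \<in> carrier G" using Ac a .
      show "a \<in> S" unfolding S_def
      proof (intro CollectI conjI ballI ac)
        fix x assume x: "x \<in> C"
        have xc: "x \<in> carrier G" using Cc x .
        have e: "a \<otimes> x = x \<otimes> a" using comm a x C by auto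
        have "a \<otimes> x \<otimes> inv a = x" using e ac xc by (simp add: m_assoc)
        then show "a \<otimes> x \<otimes> inv a \<in> C" using x by simp
        have "inv a \<otimes> x \<otimes> a = inv a \<otimes> (a \<otimes> x)" using e ac xc by (simp add: m_assoc)
        then have "inv a \<otimes> x \<otimes> a = x" using ac xc by simp
        then show "inv a \<otimes> x \<otimes> a \<in> C" using x by simp
      qed
    qed
    have gS: "generate G {t} \<subseteq> S" using generate_subgroup_incl[OF _ sS, of "{t}"] tS by auto
    have allS: "carrier G \<subseteq> S"
    proof
      fix g assume "g \<in> carrier G"
      then have "g \<in> A <#> generate G {t}" using gen by simp
      then obtain a s where as: "a \<in> A" "s \<in> generate G {t}" "g = a \<otimes> s" by (rule set_multE)
      have "a \<otimes> s \<in> S" using as AS gS subgroup.m_closed[OF sS] by auto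
      then show "g \<in> S" using as by simp
    qed
    show ?thesis unfolding normal_inv_iff using C allS unfolding S_def by auto
  qed
  have iii: "\<exists>a\<in>A. t \<otimes> a \<in> H" if H: "subgroup H G" "\<not> H \<subseteq> A" for H
  proof -
    obtain h where h: "h \<in> H" "h \<notin> A" using H(2) by auto
    have hc: "h \<in> carrier G" using subgroup.mem_carrier[OF H(1) h(1)] .
    then have "h \<in> A <#> generate G {t}" using gen by simp
    then obtain a s where as: "a \<in> A" "s \<in> generate G {t}" "h = a \<otimes> s" by (rule set_multE)
    have ac: "a \<in> carrier G" using Ac as(1) .
    obtain k :: int where k: "s = t [^] k" using as(2) generate_pow[OF tc] by auto
    have q0: "q > 0" using qp prime_gt_0_nat by simp
    have tq: "t [^] q = \<one>" using pow_ord_eq_1[OF tc] ot by simp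
    define k0 where "k0 = nat (k mod int q)"
    have sk0: "s = t [^] k0" unfolding k k0_def by (rule expo_mod_int[OF tc tq q0])
    have k0q: "k0 < q"
    proof -
      have "0 \<le> k mod int q" "k mod int q < int q" using q0 by simp_all
      then show ?thesis unfolding k0_def by (simp add: nat_less_iff)
    qed
    have sc: "s \<in> carrier G" using sk0 tc by simp
    have sA': "s \<notin> A"
    proof
      assume "s \<in> A"
      then have "a \<otimes> s \<in> A" using as(1) subgroup.m_closed[OF sA] by auto
      then show False using h as by simp
    qed
    have k0nz: "k0 \<noteq> 0"
    proof
      assume "k0 = 0"
      then have "s = \<one>" using sk0 by simp
      then show False using sA' subgroup.one_closed[OF sA] by simp
    qed
    have "\<not> q dvd k0" using k0nz k0q by (auto dest: dvd_imp_le)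
    then have "coprime k0 q" using prime_imp_coprime[OF qp, of k0] by (simp add: coprime_commute)
    then obtain j y where b: "k0 * j = q * y + 1" using bezout_nat[OF k0nz, of q] by auto
    have m1: "(k0 * j) mod q = 1 mod q" unfolding b by (rule mod_mult_self4)
    have sj: "s [^] j = t"
    proof -
      have "s [^] j = t [^] (k0 * j)" unfolding sk0 using tc by (simp add: nat_pow_pow)
      also have "\<dots> = t [^] ((k0 * j) mod q)" by (rule expo_mod_nat[OF tc tq])
      also have "\<dots> = t [^] (1 mod q)" unfolding m1 ..
      also have "\<dots> = t" using expo_mod_nat[OF tc tq, of 1] tc by simp
      finally show ?thesis .
    qed
    obtain b where bA: "b \<in> A" and hj: "(a \<otimes> s) [^] j = b \<otimes> s [^] j"
      using normal_pow_prod[OF nA as(1) sc] by blast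
    have bc: "b \<in> carrier G" using Ac bA .
    have hjH: "b \<otimes> t \<in> H" using sub_pow[OF H(1) h(1), of j] hj sj as(3) by simp
    have a'A: "inv t \<otimes> b \<otimes> t \<in> A" by (rule normal.inv_op_closed1[OF nA tc bA])
    have "t \<otimes> (inv t \<otimes> b \<otimes> t) = b \<otimes> t" using tc bc by (simp add: m_assoc)
    then show ?thesis using a'A hjH by metis
  qed
  have "pgrp G A t p"
    unfolding pgrp_def pgrp_axioms_def
    using is_group nA comm ex pp nsub tc iii gen by auto
  then show ?thesis by blast
qed

lemma (in group) Pgroup_modular:
  assumes "P_group_type p q G" "subgroup B G"
  shows "modular_subgroup G B"
proof -
  obtain A t where "pgrp G A t p" using Pgroup_pgrp[OF assms(1)] by blast
  then show ?thesis using modular_from_law[OF assms(2)] pgrp.modlaw by metis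
qed

lemma (in group_hom) vimage_sub:
  assumes S: "subgroup S H" shows "subgroup {g \<in> carrier G. h g \<in> S} G"
proof (rule G.subgroupI)
  show "{g \<in> carrier G. h g \<in> S} \<subseteq> carrier G" by auto
  have "\<one> \<in> {g \<in> carrier G. h g \<in> S}" using subgroup.one_closed[OF S] by simp
  then show "{g \<in> carrier G. h g \<in> S} \<noteq> {}" by auto
next
  fix a assume "a \<in> {g \<in> carrier G. h g \<in> S}"
  then show "inv a \<in> {g \<in> carrier G. h g \<in> S}" using subgroup.m_inv_closed[OF S] by (simp add: hom_inv)
next
  fix a b assume "a \<in> {g \<in> carrier G. h g \<in> S}" "b \<in> {g \<in> carrier G. h g \<in> S}"
  then show "a \<otimes> b \<in> {g \<in> carrier G. h g \<in> S}" using subgroup.m_closed[OF S] by simp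
qed

lemma (in group_hom) img_vimage:
  assumes surj: "h ` carrier G = carrier H" and S: "S \<subseteq> carrier H"
  shows "h ` {g \<in> carrier G. h g \<in> S} = S"
  using assms by auto

lemma (in group_hom) mod_push:
  assumes surj: "h ` carrier G = carrier H" and M: "modular_subgroup G M"
  shows "modular_subgroup H (h ` M)"
proof -
  have sM: "subgroup M G" using M unfolding modular_subgroup_def by auto
  have Mc: "M \<subseteq> carrier G" using subgroup.subset[OF sM] .
  have m1: "\<And>U W. subgroup U G \<Longrightarrow> subgroup W G \<Longrightarrow> U \<subseteq> W \<Longrightarrow>
        generate G (U \<union> (M \<inter> W)) = generate G (U \<union> M) \<inter> W"
    using M unfolding modular_subgroup_def by blast
  have m2: "\<And>V W. subgroup V G \<Longrightarrow> subgroup W G \<Longrightarrow> M \<subseteq> W \<Longrightarrow>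
        generate G (M \<union> (V \<inter> W)) = generate G (M \<union> V) \<inter> W"
    using M unfolding modular_subgroup_def by blast
  show ?thesis
    unfolding modular_subgroup_def
  proof (intro conjI allI impI)
    show "subgroup (h ` M) H" by (rule subgroup_img_is_subgroup[OF sM])
    fix U' W' assume a: "subgroup U' H \<and> subgroup W' H \<and> U' \<subseteq> W'"
    define U where "U = {g \<in> carrier G. h g \<in> U'}"
    define W where "W = {g \<in> carrier G. h g \<in> W'}"
    have sU: "subgroup U G" unfolding U_def using vimage_sub a by auto
    have sW: "subgroup W G" unfolding W_def using vimage_sub a by auto
    have UW: "U \<subseteq> W" unfolding U_def W_def using a by auto
    have hU: "h ` U = U'" unfolding U_def using img_vimage[OF surj] a subgroup.subset by metis
    have hW: "h ` W = W'" unfolding W_def using img_vimage[OF surj] a subgroup.subset by metis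
    have Uc: "U \<subseteq> carrier G" "W \<subseteq> carrier G" unfolding U_def W_def by auto
    show "generate H (U' \<union> (h ` M \<inter> W')) = generate H (U' \<union> h ` M) \<inter> W'"
    proof
      show "generate H (U' \<union> (h ` M \<inter> W')) \<subseteq> generate H (U' \<union> h ` M) \<inter> W'"
        by (rule H.gen_sub_easy) (use a subgroup.subset[OF subgroup_img_is_subgroup[OF sM]]
          subgroup.subset[of U' H] in auto)
    next
      show "generate H (U' \<union> h ` M) \<inter> W' \<subseteq> generate H (U' \<union> (h ` M \<inter> W'))"
      proof
        fix y assume y: "y \<in> generate H (U' \<union> h ` M) \<inter> W'"
        have "generate H (U' \<union> h ` M) = h ` generate G (U \<union> M)"
          using generate_img[of "U \<union> M"] Uc Mc hU by (simp add: image_Un)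
        then obtain x where x: "x \<in> generate G (U \<union> M)" "y = h x" using y by auto
        have xc: "x \<in> carrier G" using x G.generate_incl[of "U \<union> M"] Uc Mc by auto
        have "x \<in> W" unfolding W_def using xc x y by auto
        then have "x \<in> generate G (U \<union> (M \<inter> W))" using x m1[OF sU sW UW] by auto
        then have "y \<in> h ` generate G (U \<union> (M \<inter> W))" using x by auto
        also have "\<dots> = generate H (h ` (U \<union> (M \<inter> W)))"
          using generate_img[of "U \<union> (M \<inter> W)"] Uc Mc by auto
        also have "\<dots> \<subseteq> generate H (U' \<union> (h ` M \<inter> W'))"
          by (rule H.mono_generate) (use hU hW in auto)
        finally show "y \<in> generate H (U' \<union> (h ` M \<inter> W'))" .
      qed
    qed
  next
    fix V' Z' assume a: "subgroup V' H \<and> subgroup Z' H \<and> h ` M \<subseteq> Z'"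
    define V where "V = {g \<in> carrier G. h g \<in> V'}"
    define Z where "Z = {g \<in> carrier G. h g \<in> Z'}"
    have sV: "subgroup V G" unfolding V_def using vimage_sub a by auto
    have sZ: "subgroup Z G" unfolding Z_def using vimage_sub a by auto
    have MZ: "M \<subseteq> Z" unfolding Z_def using a Mc by auto
    have hV: "h ` V = V'" unfolding V_def using img_vimage[OF surj] a subgroup.subset by metis
    have hZ: "h ` Z = Z'" unfolding Z_def using img_vimage[OF surj] a subgroup.subset by metis
    have Vc: "V \<subseteq> carrier G" "Z \<subseteq> carrier G" unfolding V_def Z_def by auto
    show "generate H (h ` M \<union> (V' \<inter> Z')) = generate H (h ` M \<union> V') \<inter> Z'"
    proof
      show "generate H (h ` M \<union> (V' \<inter> Z')) \<subseteq> generate H (h ` M \<union> V') \<inter> Z'"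
        by (rule H.gen_sub_easy) (use a subgroup.subset[OF subgroup_img_is_subgroup[OF sM]]
          subgroup.subset[of V' H] in auto)
    next
      show "generate H (h ` M \<union> V') \<inter> Z' \<subseteq> generate H (h ` M \<union> (V' \<inter> Z'))"
      proof
        fix y assume y: "y \<in> generate H (h ` M \<union> V') \<inter> Z'"
        have "generate H (h ` M \<union> V') = h ` generate G (M \<union> V)"
          using generate_img[of "M \<union> V"] Vc Mc hV by (simp add: image_Un)
        then obtain x where x: "x \<in> generate G (M \<union> V)" "y = h x" using y by auto
        have xc: "x \<in> carrier G" using x G.generate_incl[of "M \<union> V"] Vc Mc by auto
        have "x \<in> Z" unfolding Z_def using xc x y by auto
        then have "x \<in> generate G (M \<union> (V \<inter> Z))" using x m2[OF sV sZ MZ] by auto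
        then have "y \<in> h ` generate G (M \<union> (V \<inter> Z))" using x by auto
        also have "\<dots> = generate H (h ` (M \<union> (V \<inter> Z)))"
          using generate_img[of "M \<union> (V \<inter> Z)"] Vc Mc by auto
        also have "\<dots> \<subseteq> generate H (h ` M \<union> (V' \<inter> Z'))"
          by (rule H.mono_generate) (use hV hZ in auto)
        finally show "y \<in> generate H (h ` M \<union> (V' \<inter> Z'))" .
      qed
    qed
  qed
qed

lemma (in group_hom) mod_pull:
  assumes surj: "h ` carrier G = carrier H" and B: "modular_subgroup H B"
  shows "modular_subgroup G {g \<in> carrier G. h g \<in> B}"
proof -
  define M where "M = {g \<in> carrier G. h g \<in> B}"
  have sB: "subgroup B H" using B unfolding modular_subgroup_def by auto
  have Bc: "B \<subseteq> carrier H" using subgroup.subset[OF sB] .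
  have m1: "\<And>U W. subgroup U H \<Longrightarrow> subgroup W H \<Longrightarrow> U \<subseteq> W \<Longrightarrow>
        generate H (U \<union> (B \<inter> W)) = generate H (U \<union> B) \<inter> W"
    using B unfolding modular_subgroup_def by blast
  have m2: "\<And>V W. subgroup V H \<Longrightarrow> subgroup W H \<Longrightarrow> B \<subseteq> W \<Longrightarrow>
        generate H (B \<union> (V \<inter> W)) = generate H (B \<union> V) \<inter> W"
    using B unfolding modular_subgroup_def by blast
  have sM: "subgroup M G" unfolding M_def by (rule vimage_sub[OF sB])
  have Mc: "M \<subseteq> carrier G" unfolding M_def by auto
  have hM: "h ` M = B" unfolding M_def by (rule img_vimage[OF surj Bc])
  have KM: "\<And>k. k \<in> carrier G \<Longrightarrow> h k = \<one>\<^bsub>H\<^esub> \<Longrightarrow> k \<in> M"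
    unfolding M_def using subgroup.one_closed[OF sB] by auto
  have fib: "\<exists>k. k \<in> carrier G \<and> h k = \<one>\<^bsub>H\<^esub> \<and> x = d \<otimes> k"
    if "x \<in> carrier G" "d \<in> carrier G" "h x = h d" for x d
  proof -
    have "h (inv d \<otimes> x) = inv\<^bsub>H\<^esub> (h d) \<otimes>\<^bsub>H\<^esub> h x" using that by (simp add: hom_inv)
    also have "\<dots> = \<one>\<^bsub>H\<^esub>" using that(2,3) by simp
    finally have 1: "h (inv d \<otimes> x) = \<one>\<^bsub>H\<^esub>" .
    have 2: "x = d \<otimes> (inv d \<otimes> x)" using that(1,2) by simp
    have 3: "inv d \<otimes> x \<in> carrier G" using that(1,2) by simp
    show ?thesis using 1 2 3 by (intro exI[of _ "inv d \<otimes> x"]) simp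
  qed
  show ?thesis
    unfolding M_def[symmetric] modular_subgroup_def
  proof (intro conjI allI impI)
    show "subgroup M G" by (rule sM)
    fix U W assume a: "subgroup U G \<and> subgroup W G \<and> U \<subseteq> W"
    have Uc: "U \<subseteq> carrier G" "W \<subseteq> carrier G" using a subgroup.subset by auto
    let ?D = "generate G (U \<union> (M \<inter> W))"
    have sD: "subgroup ?D G" by (rule G.generate_is_subgroup) (use Uc Mc in auto)
    have DW: "?D \<subseteq> W" by (rule G.generate_subgroup_incl) (use a in auto)
    show "?D = generate G (U \<union> M) \<inter> W"
    proof
      show "?D \<subseteq> generate G (U \<union> M) \<inter> W"
        by (rule G.gen_sub_easy) (use a Uc Mc in auto)
    next
      show "generate G (U \<union> M) \<inter> W \<subseteq> ?D"
      proof
        fix x assume x: "x \<in> generate G (U \<union> M) \<inter> W"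
        have xc: "x \<in> carrier G" using x Uc by auto
        have "h x \<in> h ` generate G (U \<union> M)" using x by auto
        also have "\<dots> = generate H (h ` U \<union> B)" using generate_img[of "U \<union> M"] Uc Mc hM by (simp add: image_Un)
        finally have "h x \<in> generate H (h ` U \<union> B) \<inter> h ` W" using x by auto
        also have "\<dots> = generate H (h ` U \<union> (B \<inter> h ` W))"
          using m1[of "h ` U" "h ` W"] subgroup_img_is_subgroup a by auto
        also have "\<dots> \<subseteq> generate H (h ` (U \<union> (M \<inter> W)))"
        proof (rule H.mono_generate)
          show "h ` U \<union> (B \<inter> h ` W) \<subseteq> h ` (U \<union> (M \<inter> W))"
          proof
            fix y assume "y \<in> h ` U \<union> (B \<inter> h ` W)"
            then show "y \<in> h ` (U \<union> (M \<inter> W))"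
            proof
              assume "y \<in> h ` U" then show ?thesis by auto
            next
              assume "y \<in> B \<inter> h ` W"
              then obtain w where "w \<in> W" "y = h w" "y \<in> B" by auto
              then have "w \<in> M \<inter> W" unfolding M_def using Uc by auto
              then show ?thesis using \<open>y = h w\<close> by auto
            qed
          qed
        qed
        also have "\<dots> = h ` ?D" using generate_img[of "U \<union> (M \<inter> W)"] Uc Mc by auto
        finally obtain d where d: "d \<in> ?D" "h x = h d" by auto
        have dc: "d \<in> carrier G" using d sD subgroup.subset by blast
        obtain k where k: "k \<in> carrier G" "h k = \<one>\<^bsub>H\<^esub>" "x = d \<otimes> k" using fib[OF xc dc d(2)] by auto
        have "k = inv d \<otimes> x" using k dc by simp
        also have "\<dots> \<in> W" using x d DW subgroup.m_closed[of W G] subgroup.m_inv_closed[of W G] a by auto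
        finally have "k \<in> M \<inter> W" using KM k by auto
        then have "k \<in> ?D" using generate.incl[of k "U \<union> (M \<inter> W)" G] by auto
        then show "x \<in> ?D" using k d subgroup.m_closed[OF sD] by auto
      qed
    qed
  next
    fix V Z assume a: "subgroup V G \<and> subgroup Z G \<and> M \<subseteq> Z"
    have Vc: "V \<subseteq> carrier G" "Z \<subseteq> carrier G" using a subgroup.subset by auto
    let ?D = "generate G (M \<union> (V \<inter> Z))"
    have sD: "subgroup ?D G" by (rule G.generate_is_subgroup) (use Vc Mc in auto)
    show "?D = generate G (M \<union> V) \<inter> Z"
    proof
      show "?D \<subseteq> generate G (M \<union> V) \<inter> Z"
        by (rule G.gen_sub_easy) (use a Vc Mc in auto)
    next
      show "generate G (M \<union> V) \<inter> Z \<subseteq> ?D"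
      proof
        fix x assume x: "x \<in> generate G (M \<union> V) \<inter> Z"
        have xc: "x \<in> carrier G" using x Vc by auto
        have "h x \<in> h ` generate G (M \<union> V)" using x by auto
        also have "\<dots> = generate H (B \<union> h ` V)" using generate_img[of "M \<union> V"] Vc Mc hM by (simp add: image_Un)
        finally have "h x \<in> generate H (B \<union> h ` V) \<inter> h ` Z" using x by auto
        also have "\<dots> = generate H (B \<union> (h ` V \<inter> h ` Z))"
          using m2[of "h ` V" "h ` Z"] subgroup_img_is_subgroup a hM by auto
        also have "\<dots> \<subseteq> generate H (h ` (M \<union> (V \<inter> Z)))"
        proof (rule H.mono_generate)
          show "B \<union> (h ` V \<inter> h ` Z) \<subseteq> h ` (M \<union> (V \<inter> Z))"
          proof
            fix y assume "y \<in> B \<union> (h ` V \<inter> h ` Z)"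
            then show "y \<in> h ` (M \<union> (V \<inter> Z))"
            proof
              assume "y \<in> B" then show ?thesis using hM by auto
            next
              assume "y \<in> h ` V \<inter> h ` Z"
              then obtain v z where vz: "v \<in> V" "z \<in> Z" "y = h v" "h v = h z" by auto
              have vc: "v \<in> carrier G" "z \<in> carrier G" using vz Vc by auto
              obtain k where k: "k \<in> carrier G" "h k = \<one>\<^bsub>H\<^esub>" "v = z \<otimes> k" using fib[OF vc vz(4)] by auto
              have "k \<in> Z" using KM k a by auto
              then have "v \<in> Z" using k vz subgroup.m_closed[of Z G] a by auto
              then have "v \<in> M \<union> (V \<inter> Z)" using vz by auto
              then show ?thesis using vz(3) by (rule rev_image_eqI[of v]) 
            qed
          qed
        qed
        also have "\<dots> = h ` ?D" using generate_img[of "M \<union> (V \<inter> Z)"] Vc Mc by auto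
        finally obtain d where d: "d \<in> ?D" "h x = h d" by auto
        have dc: "d \<in> carrier G" using d sD subgroup.subset by blast
        obtain k where k: "k \<in> carrier G" "h k = \<one>\<^bsub>H\<^esub>" "x = d \<otimes> k" using fib[OF xc dc d(2)] by auto
        have "k \<in> M" using KM k by auto
        then have "k \<in> ?D" using generate.incl[of k "M \<union> (V \<inter> Z)" G] by auto
        then show "x \<in> ?D" using k d subgroup.m_closed[OF sD] by auto
      qed
    qed
  qed
qed

lemma (in group) normal_modular:
  assumes N: "N \<lhd> G" shows "modular_subgroup G N"
  unfolding modular_subgroup_def
proof (intro conjI allI impI)
  show sN: "subgroup N G" using normal_imp_subgroup[OF N] .
  fix U W assume a: "subgroup U G \<and> subgroup W G \<and> U \<subseteq> W"
  have Uc: "U \<subseteq> carrier G" "W \<subseteq> carrier G" "N \<subseteq> carrier G" using a sN subgroup.subset by auto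
  let ?D = "generate G (U \<union> (N \<inter> W))"
  have sD: "subgroup ?D G" by (rule generate_is_subgroup) (use Uc in auto)
  show "?D = generate G (U \<union> N) \<inter> W"
  proof
    show "?D \<subseteq> generate G (U \<union> N) \<inter> W" by (rule gen_sub_easy) (use a Uc in auto)
  next
    show "generate G (U \<union> N) \<inter> W \<subseteq> ?D"
    proof
      fix g assume g: "g \<in> generate G (U \<union> N) \<inter> W"
      then have "g \<in> N <#> U" using gen_normal_prod(2)[OF N] a by auto
      then obtain n u where nu: "n \<in> N" "u \<in> U" "g = n \<otimes> u" by (rule set_multE)
      have c: "n \<in> carrier G" "u \<in> carrier G" using nu Uc by auto
      have "n = g \<otimes> inv u" using nu c by (simp add: m_assoc)
      also have "\<dots> \<in> W" using g nu a subgroup.m_closed[of W G] subgroup.m_inv_closed[of W G] by auto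
      finally have "n \<in> ?D" using nu generate.incl[of n "U \<union> (N \<inter> W)" G] by auto
      moreover have "u \<in> ?D" using nu generate.incl[of u "U \<union> (N \<inter> W)" G] by auto
      ultimately show "g \<in> ?D" using nu subgroup.m_closed[OF sD] by auto
    qed
  qed
next
  fix V Z assume a: "subgroup V G \<and> subgroup Z G \<and> N \<subseteq> Z"
  have sN: "subgroup N G" using normal_imp_subgroup[OF N] .
  have Vc: "V \<subseteq> carrier G" "Z \<subseteq> carrier G" "N \<subseteq> carrier G" using a sN subgroup.subset by auto
  let ?D = "generate G (N \<union> (V \<inter> Z))"
  have sD: "subgroup ?D G" by (rule generate_is_subgroup) (use Vc in auto)
  show "?D = generate G (N \<union> V) \<inter> Z"
  proof
    show "?D \<subseteq> generate G (N \<union> V) \<inter> Z" by (rule gen_sub_easy) (use a Vc in auto)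
  next
    show "generate G (N \<union> V) \<inter> Z \<subseteq> ?D"
    proof
      fix g assume g: "g \<in> generate G (N \<union> V) \<inter> Z"
      then have "g \<in> N <#> V" using gen_normal_prod(1)[OF N] a by auto
      then obtain n v where nv: "n \<in> N" "v \<in> V" "g = n \<otimes> v" by (rule set_multE)
      have c: "n \<in> carrier G" "v \<in> carrier G" using nv Vc by auto
      have "v = inv n \<otimes> g" using nv c by simp
      also have "\<dots> \<in> Z" using g nv a subgroup.m_closed[of Z G] subgroup.m_inv_closed[of Z G] by auto
      finally have "v \<in> ?D" using nv generate.incl[of v "N \<union> (V \<inter> Z)" G] by auto
      moreover have "n \<in> ?D" using nv generate.incl[of n "N \<union> (V \<inter> Z)" G] by auto
      ultimately show "g \<in> ?D" using nv subgroup.m_closed[OF sD] by auto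
    qed
  qed
qed

lemma (in group) core_mem:
  assumes Mc: "M \<subseteq> carrier G"
  shows "x \<in> core G M \<longleftrightarrow> x \<in> carrier G \<and> (\<forall>g\<in>carrier G. inv g \<otimes> x \<otimes> g \<in> M)"
proof
  assume x: "x \<in> core G M"
  have x1: "x \<in> (\<lambda>y. \<one> \<otimes> y \<otimes> inv \<one>) ` M" using x unfolding core_def by blast
  then have xc: "x \<in> carrier G" using Mc by auto
  have "inv g \<otimes> x \<otimes> g \<in> M" if g: "g \<in> carrier G" for g
  proof -
    have "x \<in> (\<lambda>y. g \<otimes> y \<otimes> inv g) ` M" using x g unfolding core_def by blast
    then obtain y where y: "y \<in> M" "x = g \<otimes> y \<otimes> inv g" by auto
    have yc: "y \<in> carrier G" using y Mc by auto
    have "inv g \<otimes> x \<otimes> g = y" using y(2) g yc by (simp add: m_assoc)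
    then show ?thesis using y by simp
  qed
  then show "x \<in> carrier G \<and> (\<forall>g\<in>carrier G. inv g \<otimes> x \<otimes> g \<in> M)" using xc by auto
next
  assume a: "x \<in> carrier G \<and> (\<forall>g\<in>carrier G. inv g \<otimes> x \<otimes> g \<in> M)"
  show "x \<in> core G M" unfolding core_def
  proof
    fix g assume g: "g \<in> carrier G"
    have "inv g \<otimes> x \<otimes> g \<in> M" using a g by auto
    moreover have "x = g \<otimes> (inv g \<otimes> x \<otimes> g) \<otimes> inv g" using a g by (simp add: m_assoc)
    ultimately show "x \<in> (\<lambda>x. g \<otimes> x \<otimes> inv g) ` M" by (rule rev_image_eqI)
  qed
qed

lemma (in group) core_sub:
  assumes M: "subgroup M G" shows "subgroup (core G M) G"
proof -
  have Mc: "M \<subseteq> carrier G" using subgroup.subset[OF M] .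
  show ?thesis
  proof (rule subgroupI)
    show "core G M \<subseteq> carrier G" using core_mem[OF Mc] by auto
    have "\<one> \<in> core G M" using core_mem[OF Mc] subgroup.one_closed[OF M] by auto
    then show "core G M \<noteq> {}" by auto
  next
    fix a assume a: "a \<in> core G M"
    then have ac: "a \<in> carrier G" using core_mem[OF Mc] by auto
    have "inv g \<otimes> inv a \<otimes> g \<in> M" if g: "g \<in> carrier G" for g
    proof -
      have "inv g \<otimes> a \<otimes> g \<in> M" using a g core_mem[OF Mc] by auto
      then have "inv (inv g \<otimes> a \<otimes> g) \<in> M" using subgroup.m_inv_closed[OF M] by auto
      moreover have "inv (inv g \<otimes> a \<otimes> g) = inv g \<otimes> inv a \<otimes> g" using g ac by (simp add: inv_mult_group m_assoc)
      ultimately show ?thesis by simp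
    qed
    then show "inv a \<in> core G M" using core_mem[OF Mc] ac by auto
  next
    fix a b assume a: "a \<in> core G M" and b: "b \<in> core G M"
    then have ac: "a \<in> carrier G" and bc: "b \<in> carrier G" using core_mem[OF Mc] by auto
    have "inv g \<otimes> (a \<otimes> b) \<otimes> g \<in> M" if g: "g \<in> carrier G" for g
    proof -
      have "inv g \<otimes> a \<otimes> g \<in> M" "inv g \<otimes> b \<otimes> g \<in> M" using a b g core_mem[OF Mc] by auto
      then have "(inv g \<otimes> a \<otimes> g) \<otimes> (inv g \<otimes> b \<otimes> g) \<in> M" using subgroup.m_closed[OF M] by auto
      moreover have "(inv g \<otimes> a \<otimes> g) \<otimes> (inv g \<otimes> b \<otimes> g) = inv g \<otimes> (a \<otimes> b) \<otimes> g"
        using g ac bc by (simp add: m_assoc)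
      ultimately show ?thesis by simp
    qed
    then show "a \<otimes> b \<in> core G M" using core_mem[OF Mc] ac bc by auto
  qed
qed

lemma (in group_hom) card_core_dvd:
  assumes fin: "finite (carrier G)" and surj: "h ` carrier G = carrier H"
    and M: "subgroup M G" and KM: "kernel G H h \<subseteq> M"
  shows "order (G Mod core G M) dvd order H"
proof -
  let ?C = "core G M"
  let ?K = "kernel G H h"
  have Mc: "M \<subseteq> carrier G" using subgroup.subset[OF M] .
  have sC: "subgroup ?C G" using G.core_sub[OF M] .
  have sK: "subgroup ?K G" using subgroup_kernel .
  have KC: "?K \<subseteq> ?C"
  proof
    fix k assume k: "k \<in> ?K"
    have "inv g \<otimes> k \<otimes> g \<in> M" if g: "g \<in> carrier G" for g
      using normal.inv_op_closed1[OF normal_kernel g k] KM by auto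
    then show "k \<in> ?C" using G.core_mem[OF Mc] k unfolding kernel_def by auto
  qed
  have L1: "card (rcosets ?C) * card ?C = order G" using G.lagrange[OF sC] .
  have L2: "card (rcosets ?K) * card ?K = order G" using G.lagrange[OF sK] .
  have L3: "card (rcosets ?K) = order H"
    using iso_same_card[OF FactGroup_iso[OF surj]] unfolding order_def by (simp add: FactGroup_def)
  have sKC: "subgroup ?K (G\<lparr>carrier := ?C\<rparr>)" by (rule G.subgroup_incl[OF sK sC KC])
  have gC: "group (G\<lparr>carrier := ?C\<rparr>)" using G.subgroup_imp_group[OF sC] .
  have L4: "card ?K dvd card ?C"
  proof -
    have "card (rcosets\<^bsub>G\<lparr>carrier := ?C\<rparr>\<^esub> ?K) * card ?K = card ?C"
      using group.lagrange[OF gC sKC] unfolding order_def by simp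
    then show ?thesis by (metis dvd_triv_right)
  qed
  have Kpos: "card ?K > 0"
  proof -
    have "finite ?K" using fin subgroup.subset[OF sK] finite_subset by blast
    moreover have "?K \<noteq> {}" using subgroup.one_closed[OF sK] by auto
    ultimately show ?thesis by (simp add: card_gt_0_iff)
  qed
  obtain j where j: "card ?C = card ?K * j" using L4 by (auto elim: dvdE)
  have "card (rcosets ?C) * j * card ?K = order H * card ?K" using L1 L2 L3 j by (simp add: ac_simps)
  then have "card (rcosets ?C) * j = order H" using Kpos by simp
  then have "card (rcosets ?C) dvd order H" by (metis dvd_triv_left)
  then show ?thesis unfolding order_def by (simp add: FactGroup_def)
qed

lemma main_step:
  fixes \<sigma> :: "nat set set" and G :: "('a, 'b) monoid_scheme"
  assumes G: "group G" and fin: "finite (carrier G)" and QT: "QsigmaT_group \<sigma> G"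
    and R: "R \<lhd> G" and N: "N \<lhd> (G Mod R)" and Q: "Q \<lhd> ((G Mod R) Mod N)"
    and sp: "sigma_primary \<sigma> (((G Mod R) Mod N)\<lparr>carrier := Q\<rparr>)"
    and pt: "P_group_type p q (((G Mod R) Mod N)\<lparr>carrier := Q\<rparr>)"
    and B: "subgroup B ((G Mod R) Mod N)" and BQ: "B \<subseteq> Q"
  shows "modular_subgroup ((G Mod R) Mod N) B"
proof -
  interpret G: group G by (rule G)
  define Xg where "Xg = G Mod R"
  define Yg where "Yg = Xg Mod N"
  have gXg: "group Xg" unfolding Xg_def by (rule normal.factorgroup_is_group[OF R])
  have gY: "group Yg" unfolding Yg_def Xg_def by (rule normal.factorgroup_is_group[OF N])
  interpret Xg: group Xg by (rule gXg)
  interpret Y: group Yg by (rule gY)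
  define f where "f = (\<lambda>g. N #>\<^bsub>Xg\<^esub> (R #>\<^bsub>G\<^esub> g))"
  have r1: "(\<lambda>a. R #>\<^bsub>G\<^esub> a) \<in> hom G Xg" unfolding Xg_def by (rule normal.r_coset_hom_Mod[OF R])
  have r2: "(\<lambda>a. N #>\<^bsub>Xg\<^esub> a) \<in> hom Xg Yg" unfolding Yg_def using normal.r_coset_hom_Mod[OF N] Xg_def by simp
  have hf: "f \<in> hom G Yg"
  proof -
    have "f \<in> carrier G \<rightarrow> carrier Yg"
      using hom_in_carrier[OF r1] hom_in_carrier[OF r2] unfolding f_def by auto
    moreover have "f (x \<otimes>\<^bsub>G\<^esub> y) = f x \<otimes>\<^bsub>Yg\<^esub> f y" if "x \<in> carrier G" "y \<in> carrier G" for x y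
      using that hom_mult[OF r1] hom_mult[OF r2] hom_in_carrier[OF r1] unfolding f_def by simp
    ultimately show ?thesis unfolding hom_def by auto
  qed
  have surj: "f ` carrier G = carrier Yg"
  proof
    show "f ` carrier G \<subseteq> carrier Yg" using hom_in_carrier[OF hf] by auto
    show "carrier Yg \<subseteq> f ` carrier G"
    proof
      fix y assume "y \<in> carrier Yg"
      then obtain x where x: "x \<in> carrier Xg" "y = N #>\<^bsub>Xg\<^esub> x"
        unfolding Yg_def FactGroup_def RCOSETS_def by auto
      then obtain g where g: "g \<in> carrier G" "x = R #>\<^bsub>G\<^esub> g"
        unfolding Xg_def FactGroup_def RCOSETS_def by auto
      show "y \<in> f ` carrier G" using x g unfolding f_def by auto
    qed
  qed
  interpret fh: group_hom G Yg f unfolding group_hom_def group_hom_axioms_def using G gY hf by auto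
  have sQ: "subgroup Q Yg" using normal_imp_subgroup Q unfolding Yg_def Xg_def by auto
  have sB: "subgroup B Yg" using B unfolding Yg_def Xg_def by simp
  define Qs where "Qs = {g \<in> carrier G. f g \<in> Q}"
  define Bs where "Bs = {g \<in> carrier G. f g \<in> B}"
  have sQs: "subgroup Qs G" unfolding Qs_def by (rule fh.vimage_sub[OF sQ])
  have sBs: "subgroup Bs G" unfolding Bs_def by (rule fh.vimage_sub[OF sB])
  have BsQs: "Bs \<subseteq> Qs" unfolding Bs_def Qs_def using BQ by auto
  have nQs: "Qs \<lhd> G"
  proof -
    have "g \<otimes>\<^bsub>G\<^esub> x \<otimes>\<^bsub>G\<^esub> inv\<^bsub>G\<^esub> g \<in> Qs" if g: "g \<in> carrier G" and x: "x \<in> Qs" for g x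
    proof -
      have xc: "x \<in> carrier G" using x unfolding Qs_def by auto
      have "f (g \<otimes>\<^bsub>G\<^esub> x \<otimes>\<^bsub>G\<^esub> inv\<^bsub>G\<^esub> g) = f g \<otimes>\<^bsub>Yg\<^esub> f x \<otimes>\<^bsub>Yg\<^esub> inv\<^bsub>Yg\<^esub> (f g)"
        using g xc by (simp add: fh.hom_inv)
      also have "\<dots> \<in> Q"
        using normal.inv_op_closed2[OF Q[folded Xg_def, folded Yg_def]] g x unfolding Qs_def by auto
      finally show ?thesis unfolding Qs_def using g xc by auto
    qed
    then show ?thesis using G.normal_inv_iff sQs by auto
  qed
  define G' where "G' = G\<lparr>carrier := Qs\<rparr>"
  define P where "P = Yg\<lparr>carrier := Q\<rparr>"
  have gG': "group G'" unfolding G'_def by (rule G.subgroup_imp_group[OF sQs])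
  have gP: "group P" unfolding P_def by (rule Y.subgroup_imp_group[OF sQ])
  have hf': "f \<in> hom G' P"
  proof -
    have "f \<in> carrier G' \<rightarrow> carrier P" unfolding G'_def P_def Qs_def by auto
    moreover have "f (x \<otimes>\<^bsub>G'\<^esub> y) = f x \<otimes>\<^bsub>P\<^esub> f y" if "x \<in> carrier G'" "y \<in> carrier G'" for x y
      using that unfolding G'_def P_def Qs_def by simp
    ultimately show ?thesis unfolding hom_def by auto
  qed
  have Qc: "Q \<subseteq> carrier Yg" using subgroup.subset[OF sQ] .
  have Bc: "B \<subseteq> carrier Yg" using subgroup.subset[OF sB] .
  have surj': "f ` carrier G' = carrier P"
    unfolding G'_def P_def Qs_def using fh.img_vimage[OF surj Qc] by simp
  have gh': "group_hom G' P f" unfolding group_hom_def group_hom_axioms_def using gG' gP hf' by auto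
  have sBP: "subgroup B P" unfolding P_def by (rule Y.subgroup_incl[OF sB sQ BQ])
  have mBP: "modular_subgroup P B" using group.Pgroup_modular[OF gP pt[folded Xg_def, folded Yg_def, folded P_def] sBP] .
  have eqBs: "{g \<in> carrier G'. f g \<in> B} = Bs" unfolding G'_def Bs_def Qs_def using BQ by auto
  have mBs': "modular_subgroup G' Bs" using group_hom.mod_pull[OF gh' surj' mBP] eqBs by simp
  have sBsG': "subgroup Bs G'" unfolding G'_def by (rule G.subgroup_incl[OF sBs sQs BsQs])
  have kerBs: "kernel G' P f \<subseteq> Bs"
    unfolding kernel_def G'_def P_def Bs_def Qs_def using subgroup.one_closed[OF sB] by auto
  have finG': "finite (carrier G')" unfolding G'_def Qs_def using fin by auto
  have dv: "order (G' Mod core G' Bs) dvd order P"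
    by (rule group_hom.card_core_dvd[OF gh' finG' surj' sBsG' kerBs])
  obtain s where s: "s \<in> \<sigma>" "\<forall>p. Factorial_Ring.prime p \<and> p dvd order P \<longrightarrow> p \<in> s"
    using sp[folded Xg_def, folded Yg_def, folded P_def] unfolding sigma_primary_def by auto
  have spG': "sigma_primary \<sigma> (G' Mod core G' Bs)"
    unfolding sigma_primary_def using s dv dvd_trans by blast
  have G'G': "G'\<lparr>carrier := Qs\<rparr> = G'" unfolding G'_def by simp
  have snG': "sigma_subnormal \<sigma> G' Bs"
    unfolding sigma_subnormal_def
  proof (intro exI[of _ "\<lambda>i. if i = 0 then Bs else Qs"] exI[of _ "1::nat"] conjI allI impI)
    show "(if (0::nat) = 0 then Bs else Qs) = Bs" by simp
    show "(if (1::nat) = 0 then Bs else Qs) = carrier G'" unfolding G'_def by simp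
  next
    fix i :: nat assume "i \<le> 1"
    then have "i = 0 \<or> i = 1" by auto
    then show "subgroup (if i = 0 then Bs else Qs) G'"
      using sBsG' group.subgroup_self[OF gG'] unfolding G'_def by auto
  next
    fix i :: nat assume "i < 1"
    then have i0: "i = 0" by auto
    show "(if i = 0 then Bs else Qs) \<subseteq> (if Suc i = 0 then Bs else Qs)" using i0 BsQs by simp
    show "(if i = 0 then Bs else Qs) \<lhd> G'\<lparr>carrier := if Suc i = 0 then Bs else Qs\<rparr> \<or>
        sigma_primary \<sigma> (G'\<lparr>carrier := if Suc i = 0 then Bs else Qs\<rparr> Mod
          core (G'\<lparr>carrier := if Suc i = 0 then Bs else Qs\<rparr>) (if i = 0 then Bs else Qs))"
      using i0 spG' G'G' by simp
  qed
  have sqG': "sigma_quasinormal \<sigma> G' Bs" unfolding sigma_quasinormal_def using snG' mBs' by simp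
  have GG: "G\<lparr>carrier := carrier G\<rparr> = G" by simp
  have snG: "sigma_subnormal \<sigma> G Qs"
    unfolding sigma_subnormal_def
  proof (intro exI[of _ "\<lambda>i. if i = 0 then Qs else carrier G"] exI[of _ "1::nat"] conjI allI impI)
    show "(if (0::nat) = 0 then Qs else carrier G) = Qs" by simp
    show "(if (1::nat) = 0 then Qs else carrier G) = carrier G" by simp
  next
    fix i :: nat assume "i \<le> 1"
    then have "i = 0 \<or> i = 1" by auto
    then show "subgroup (if i = 0 then Qs else carrier G) G"
      using sQs G.subgroup_self by auto
  next
    fix i :: nat assume "i < 1"
    then have i0: "i = 0" by auto
    show "(if i = 0 then Qs else carrier G) \<subseteq> (if Suc i = 0 then Qs else carrier G)"
      using i0 subgroup.subset[OF sQs] by simp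
    show "(if i = 0 then Qs else carrier G) \<lhd> G\<lparr>carrier := if Suc i = 0 then Qs else carrier G\<rparr> \<or>
        sigma_primary \<sigma> (G\<lparr>carrier := if Suc i = 0 then Qs else carrier G\<rparr> Mod
          core (G\<lparr>carrier := if Suc i = 0 then Qs else carrier G\<rparr>) (if i = 0 then Qs else carrier G))"
      using i0 nQs GG by simp
  qed
  have sqG: "sigma_quasinormal \<sigma> G Qs" unfolding sigma_quasinormal_def using snG G.normal_modular[OF nQs] by simp
  have "sigma_quasinormal \<sigma> G Bs"
    using QT sQs BsQs sqG' sqG unfolding QsigmaT_group_def G'_def by blast
  then have mBs: "modular_subgroup G Bs" unfolding sigma_quasinormal_def by simp
  have "modular_subgroup Yg (f ` Bs)" by (rule fh.mod_push[OF surj mBs])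
  moreover have "f ` Bs = B" unfolding Bs_def by (rule fh.img_vimage[OF surj Bc])
  ultimately show ?thesis unfolding Yg_def Xg_def by simp
qed

theorem lemma2p5:
  fixes \<sigma> :: "nat set set" and G :: "('a, 'b) monoid_scheme"
  assumes "prime_partition \<sigma>" and "group G" and "finite (carrier G)"
    and "QsigmaT_group \<sigma> G"
  shows "\<forall>R. R \<lhd> G \<longrightarrow> Q_sigma_P \<sigma> (G Mod R)"
  unfolding Q_sigma_P_def Q_sigma_pq_def
  using main_step[OF assms(2,3,4)] by blast

end
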